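(* Let $\alpha\geqslant2$, $\mathbb{D}\in\{\mathbb{R}^2,\mathbb{R}\times\mathbb{T}\}$, $N_1,N_2,N_3\in2^{\mathbb{Z}}$ with $N_3\sim N_1\gtrsim N_2$, $L_1,L_2,L_3\in2^{\mathbb{N}_0}$ with $L_i\ll N_1^\alpha N_2$ for $i=1,2,3$, and let $f_{i,N_i,L_i}:\mathbb{R}\times\mathbb{D}^*\to\mathbb{C}$ with $\mathrm{supp}(f_{i,N_i,L_i})\subseteq D_{N_i,L_i}$, $i=1,2$. Then, with $N_{\min}=\min(N_1,N_2)$, $N_{\max}=\max(N_1,N_2)$, $$\|1_{D_{\alpha,N_3,L_3}}(f_{1,N_1,L_1}*f_{2,N_2,L_2})\|_{L^2_{\tau,\xi,\eta}(\mathbb{R}\times\mathbb{D}^* )}\lesssim(L_1\wedge L_2)^{\frac12}N_{\min}^{\frac12}C_{1,\mathbb{D}}(L_1\vee L_2,N_{\max})\prod_{i=1}^2\|f_{i,N_i,L_i}\|_{L^2_{\tau,\xi,\eta}(\mathbb{R}\times\mathbb{D}^* )}.$$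
   Context: $\mathbb{D}^*=\mathbb{R}^2$ or $\mathbb{R}\times\mathbb{Z}$ (counting measure in $\eta$). $\omega_\alpha(\xi,\eta)=\xi|\xi|^\alpha+\frac{\eta^2}{\xi}$. For $N\in2^{\mathbb{Z}}$, $A_N=\{\xi:N/4\leqslant|\xi|\leqslant4N\}$ and $D_{N,L}=D_{\alpha,N,L}=\{(\tau,\xi,\eta)\in\mathbb{R}\times\mathbb{D}^*:\xi\in A_N,\ |\tau-\omega_\alpha(\xi,\eta)|\leqslant L\}$. $C_{1,\mathbb{R}^2}(L,N)=(L/N^{\alpha/2})^{1/2}$, $C_{1,\mathbb{R}\times\mathbb{T}}(L,N)=\langle L/N^{\alpha/2}\rangle^{1/2}$. $a\wedge b=\min$, $a\vee b=\max$; $\ll$ means smaller than a sufficiently small absolute constant times. *)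

theory Defs
  imports "HOL-Analysis.Analysis"
begin

text \<open>Flag torus = False: D* = R^2 (Lebesgue in eta);
  torus = True: D* = R \<times> Z (counting measure on eta \<in> Z).\<close>

definition eta_measure :: "bool \<Rightarrow> real measure" where
  "eta_measure torus = (if torus then count_space \<int> else lborel)"

definition freq_measure :: "bool \<Rightarrow> (real \<times> real \<times> real) measure" where
  "freq_measure torus = lborel \<Otimes>\<^sub>M (lborel \<Otimes>\<^sub>M eta_measure torus)"

definition omega :: "real \<Rightarrow> real \<Rightarrow> real \<Rightarrow> real" where
  "omega \<alpha> \<xi> \<eta> = \<xi> * \<bar>\<xi>\<bar> powr \<alpha> + \<eta>\<^sup>2 / \<xi>"

definition annulus :: "real \<Rightarrow> real set" where
  "annulus N = {\<xi>. N / 4 \<le> \<bar>\<xi>\<bar> \<and> \<bar>\<xi>\<bar> \<le> 4 * N}"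

definition Dset :: "bool \<Rightarrow> real \<Rightarrow> real \<Rightarrow> real \<Rightarrow> (real \<times> real \<times> real) set" where
  "Dset torus \<alpha> N L = {(\<tau>, \<xi>, \<eta>). (torus \<longrightarrow> \<eta> \<in> \<int>) \<and> \<xi> \<in> annulus N \<and>
      \<bar>\<tau> - omega \<alpha> \<xi> \<eta>\<bar> \<le> L}"

definition conv :: "bool \<Rightarrow> (real \<times> real \<times> real \<Rightarrow> complex) \<Rightarrow> (real \<times> real \<times> real \<Rightarrow> complex)
    \<Rightarrow> real \<times> real \<times> real \<Rightarrow> complex" where
  "conv torus f g x = (\<integral>y. f y * g (x - y) \<partial>freq_measure torus)"

definition L2norm :: "bool \<Rightarrow> (real \<times> real \<times> real \<Rightarrow> complex) \<Rightarrow> ennreal" where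
  "L2norm torus f = (let I = (\<integral>\<^sup>+x. ennreal ((cmod (f x))\<^sup>2) \<partial>freq_measure torus)
     in if I = \<infinity> then \<infinity> else ennreal (sqrt (enn2real I)))"

definition japanese :: "real \<Rightarrow> real" where
  "japanese x = sqrt (1 + x\<^sup>2)"

definition C1 :: "bool \<Rightarrow> real \<Rightarrow> real \<Rightarrow> real \<Rightarrow> real" where
  "C1 torus \<alpha> L N = (if torus then sqrt (japanese (L / N powr (\<alpha> / 2)))
                      else sqrt (L / N powr (\<alpha> / 2)))"

definition dyadic_int :: "real \<Rightarrow> bool" where
  "dyadic_int N \<longleftrightarrow> (\<exists>k::int. N = 2 powr (real_of_int k))"

definition dyadic_nat :: "real \<Rightarrow> bool" where
  "dyadic_nat L \<longleftrightarrow> (\<exists>k::nat. L = 2 ^ k)"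

end

theory Submission
  imports Defs
begin


definition pp :: "real \<Rightarrow> real \<Rightarrow> real" where "pp \<alpha> x = x * \<bar>x\<bar> powr \<alpha>"

lemma superadd:
  fixes u v \<alpha> :: real assumes "\<alpha> \<ge> 1" "u > 0" "v > 0"
  shows "u powr \<alpha> + v powr \<alpha> \<le> (u+v) powr \<alpha>"
proof -
  define s where "s = u + v"
  have s: "s > 0" using assms by (simp add: s_def)
  have t1: "(u/s) powr \<alpha> \<le> u/s"
  proof -
    have "(u/s) powr \<alpha> \<le> (u/s) powr 1"
      by (rule powr_mono') (use assms s in \<open>auto simp: s_def\<close>)
    then show ?thesis using assms s by simp
  qed
  have t2: "(v/s) powr \<alpha> \<le> v/s"
  proof -
    have "(v/s) powr \<alpha> \<le> (v/s) powr 1"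
      by (rule powr_mono') (use assms s in \<open>auto simp: s_def\<close>)
    then show ?thesis using assms s by simp
  qed
  have e1: "u powr \<alpha> = (u/s) powr \<alpha> * s powr \<alpha>" using assms s by (simp add: powr_divide)
  have e2: "v powr \<alpha> = (v/s) powr \<alpha> * s powr \<alpha>" using assms s by (simp add: powr_divide)
  have "u powr \<alpha> + v powr \<alpha> \<le> (u/s + v/s) * s powr \<alpha>"
  proof -
    have "(u/s) powr \<alpha> * s powr \<alpha> \<le> (u/s) * s powr \<alpha>" using mult_right_mono[OF t1, of "s powr \<alpha>"] by simp
    moreover have "(v/s) powr \<alpha> * s powr \<alpha> \<le> (v/s) * s powr \<alpha>" using mult_right_mono[OF t2, of "s powr \<alpha>"] by simp
    ultimately show ?thesis unfolding distrib_right using e1 e2 by linarith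
  qed
  also have "u/s + v/s = 1" using s by (simp add: s_def add_divide_distrib[symmetric])
  finally show ?thesis by (simp add: s_def)
qed

lemma Pbound:
  fixes u v \<alpha> :: real assumes "\<alpha> \<ge> 1" "u > 0" "v > 0"
  shows "pp \<alpha> (u+v) - pp \<alpha> u - pp \<alpha> v \<ge> u powr \<alpha> * v + v powr \<alpha> * u"
proof -
  have S: "u powr \<alpha> + v powr \<alpha> \<le> (u+v) powr \<alpha>" by (rule superadd) (use assms in auto)
  have "pp \<alpha> (u+v) = (u+v) * (u+v) powr \<alpha>" using assms by (simp add: pp_def)
  moreover have "pp \<alpha> u = u * u powr \<alpha>" "pp \<alpha> v = v * v powr \<alpha>" using assms by (auto simp: pp_def)
  moreover have "(u+v) * (u+v) powr \<alpha> \<ge> (u+v) * (u powr \<alpha> + v powr \<alpha>)"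
    using S assms by (intro mult_left_mono) auto
  ultimately show ?thesis by (simp add: algebra_simps)
qed

lemma pp_odd: "pp \<alpha> (-x) = - pp \<alpha> x" by (simp add: pp_def)

lemma powr_lower:
  fixes x N K \<alpha> :: real assumes "\<alpha> \<ge> 0" "K \<ge> 1" "N > 0" "x \<ge> N / (4*K)"
  shows "(1/(4*K)) powr \<alpha> * N powr \<alpha> \<le> x powr \<alpha>"
proof -
  have "(1/(4*K)) powr \<alpha> * N powr \<alpha> = (N/(4*K)) powr \<alpha>"
    using assms by (simp add: powr_mult[symmetric])
  also have "\<dots> \<le> x powr \<alpha>" using assms by (intro powr_mono2) auto
  finally show ?thesis .
qed

lemma Phi_lower_pos:
  fixes \<alpha> K N1 N2 N3 a b :: real
  assumes "\<alpha> \<ge> 1" "K \<ge> 1" "N1 > 0" "N2 > 0" "N3 > 0"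
    "N1 \<le> K*N3" "N3 \<le> K*N1" "N2 \<le> K*N1"
    "a \<in> annulus N1" "b \<in> annulus N2" "a+b \<in> annulus N3" "a + b > 0"
  shows "(1/(4*K)) powr \<alpha> / (4*K\<^sup>2) * N1 powr \<alpha> * N2 \<le> \<bar>pp \<alpha> a + pp \<alpha> b - pp \<alpha> (a+b)\<bar>"
proof -
  define c where "c = (1/(4*K)) powr \<alpha>"
  have c0: "c > 0" using assms by (simp add: c_def)
  have Np: "N1 powr \<alpha> > 0" using assms by simp
  have K2: "K\<^sup>2 \<ge> 1" using assms by (simp add: one_le_power)
  have ab: "\<bar>a\<bar> \<ge> N1/4" "\<bar>a\<bar> \<le> 4*N1" "\<bar>b\<bar> \<ge> N2/4" "\<bar>b\<bar> \<le> 4*N2" "a+b \<ge> N3/4"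
    using assms by (auto simp: annulus_def)
  have N3l: "N3/4 \<ge> N1/(4*K)" using assms by (simp add: field_simps)
  have N2K: "N2/(4*K\<^sup>2) \<le> N2/4" using assms K2 by (intro divide_left_mono) auto
  have N1K: "N1/(4*K) \<le> N1/4" using assms by (intro divide_left_mono) auto
  have goalform: "c / (4*K\<^sup>2) * N1 powr \<alpha> * N2 \<le> X"
    if "c * N1 powr \<alpha> \<le> P" "N2/(4*K\<^sup>2) \<le> Q" "P * Q \<le> X" "P \<ge> 0" for P Q X
  proof -
    have "c / (4*K\<^sup>2) * N1 powr \<alpha> * N2 = (c * N1 powr \<alpha>) * (N2/(4*K\<^sup>2))" by simp
    also have "\<dots> \<le> P * Q" using that c0 Np assms by (intro mult_mono) auto
    finally show ?thesis using that by linarith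
  qed
  consider "a > 0" "b > 0" | "a > 0" "b < 0" | "a < 0" "b > 0"
  proof -
    have "a \<noteq> 0" "b \<noteq> 0" using ab assms(3,4) by auto
    then have "a > 0 \<or> a < 0" "b > 0 \<or> b < 0" by auto
    moreover have "\<not> (a < 0 \<and> b < 0)" using assms(12) by linarith
    ultimately show ?thesis using that by blast
  qed
  then show ?thesis
  proof cases
    case 1
    have P: "pp \<alpha> (a+b) - pp \<alpha> a - pp \<alpha> b \<ge> a powr \<alpha> * b + b powr \<alpha> * a"
      using Pbound[of \<alpha> a b] 1 assms by auto
    have "b powr \<alpha> * a \<ge> 0" using 1 by simp
    have "c * N1 powr \<alpha> \<le> a powr \<alpha>" unfolding c_def
      by (rule powr_lower) (use assms(1,2,3) ab(1) 1 N1K in auto)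
    moreover have "N2/(4*K\<^sup>2) \<le> b" using ab 1 N2K by linarith
    ultimately have "c / (4*K\<^sup>2) * N1 powr \<alpha> * N2 \<le> a powr \<alpha> * b"
      by (rule goalform) auto
    then show ?thesis unfolding c_def using P \<open>b powr \<alpha> * a \<ge> 0\<close> by linarith
  next
    case 2
    define u where "u = -b"
    define v where "v = a + b"
    have uv: "u > 0" "v > 0" "a = u + v" using 2 assms by (auto simp: u_def v_def)
    have P: "pp \<alpha> (u+v) - pp \<alpha> u - pp \<alpha> v \<ge> u powr \<alpha> * v + v powr \<alpha> * u"
      using Pbound[of \<alpha> u v] uv assms by auto
    have eq: "pp \<alpha> a + pp \<alpha> b - pp \<alpha> (a+b) = pp \<alpha> (u+v) - pp \<alpha> u - pp \<alpha> v"
    proof -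
      have "pp \<alpha> (u+v) = pp \<alpha> a" using uv(3) by simp
      moreover have "pp \<alpha> u = - pp \<alpha> b" by (simp add: u_def pp_odd)
      moreover have "pp \<alpha> v = pp \<alpha> (a+b)" by (simp add: v_def)
      ultimately show ?thesis by linarith
    qed
    have "u powr \<alpha> * v \<ge> 0" using uv by simp
    have "c * N1 powr \<alpha> \<le> v powr \<alpha>" unfolding c_def
      by (rule powr_lower) (use assms(1,2,3) ab(5) N3l in \<open>auto simp: v_def\<close>)
    moreover have "N2/(4*K\<^sup>2) \<le> u" using ab 2 N2K by (simp add: u_def)
    ultimately have "c / (4*K\<^sup>2) * N1 powr \<alpha> * N2 \<le> v powr \<alpha> * u"
      by (rule goalform) auto
    then show ?thesis unfolding c_def eq using P \<open>u powr \<alpha> * v \<ge> 0\<close> by linarith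
  next
    case 3
    define u where "u = -a"
    define v where "v = a + b"
    have uv: "u > 0" "v > 0" "b = u + v" using 3 assms by (auto simp: u_def v_def)
    have P: "pp \<alpha> (u+v) - pp \<alpha> u - pp \<alpha> v \<ge> u powr \<alpha> * v + v powr \<alpha> * u"
      using Pbound[of \<alpha> u v] uv assms by auto
    have eq: "pp \<alpha> a + pp \<alpha> b - pp \<alpha> (a+b) = pp \<alpha> (u+v) - pp \<alpha> u - pp \<alpha> v"
    proof -
      have "pp \<alpha> (u+v) = pp \<alpha> b" using uv(3) by simp
      moreover have "pp \<alpha> u = - pp \<alpha> a" by (simp add: u_def pp_odd)
      moreover have "pp \<alpha> v = pp \<alpha> (a+b)" by (simp add: v_def)
      ultimately show ?thesis by linarith
    qed
    have "v powr \<alpha> * u \<ge> 0" using uv by simp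
    have "c * N1 powr \<alpha> \<le> u powr \<alpha>" unfolding c_def
      by (rule powr_lower) (use assms(1,2,3) ab(1) 3 N1K in \<open>auto simp: u_def\<close>)
    moreover have "N2/(4*K\<^sup>2) \<le> v"
    proof -
      have "N2/(4*K\<^sup>2) \<le> K*N1/(4*K\<^sup>2)" using assms by (intro divide_right_mono) auto
      also have "\<dots> = N1/(4*K)" using assms by (simp add: power2_eq_square)
      finally show ?thesis using N3l ab by (simp add: v_def)
    qed
    ultimately have "c / (4*K\<^sup>2) * N1 powr \<alpha> * N2 \<le> u powr \<alpha> * v"
      by (rule goalform) auto
    then show ?thesis unfolding c_def eq using P \<open>v powr \<alpha> * u \<ge> 0\<close> by linarith
  qed
qed


lemma annulus_neg: "-x \<in> annulus N \<longleftrightarrow> x \<in> annulus N"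
  by (simp add: annulus_def)

lemma annulus_pos: "x \<in> annulus N \<Longrightarrow> N > 0 \<Longrightarrow> x \<noteq> 0"
  by (auto simp: annulus_def)

definition c0 :: "real \<Rightarrow> real \<Rightarrow> real" where
  "c0 K \<alpha> = (1/(4*K)) powr \<alpha> / (4*K\<^sup>2)"

lemma c0_pos: "K \<ge> 1 \<Longrightarrow> c0 K \<alpha> > 0"
  by (simp add: c0_def)

lemma Phi_lower:
  fixes \<alpha> K N1 N2 N3 a b :: real
  assumes "\<alpha> \<ge> 1" "K \<ge> 1" "N1 > 0" "N2 > 0" "N3 > 0"
    "N1 \<le> K*N3" "N3 \<le> K*N1" "N2 \<le> K*N1"
    "a \<in> annulus N1" "b \<in> annulus N2" "a+b \<in> annulus N3"
  shows "c0 K \<alpha> * N1 powr \<alpha> * N2 \<le> \<bar>pp \<alpha> a + pp \<alpha> b - pp \<alpha> (a+b)\<bar>"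
proof -
  have nz: "a + b \<noteq> 0" using annulus_pos[OF assms(11) assms(5)] .
  show ?thesis
  proof (cases "a + b > 0")
    case True
    then show ?thesis using Phi_lower_pos[OF assms] by (simp add: c0_def)
  next
    case False
    then have pos: "(-a) + (-b) > 0" using nz by linarith
    have "(-a) + (-b) \<in> annulus N3" using assms(11) annulus_neg[of "a+b"] by simp
    from Phi_lower_pos[OF assms(1-8) _ _ this pos] assms(9,10)
    have "(1/(4*K)) powr \<alpha> / (4*K\<^sup>2) * N1 powr \<alpha> * N2 \<le> \<bar>pp \<alpha> (-a) + pp \<alpha> (-b) - pp \<alpha> ((-a) + (-b))\<bar>"
      by (simp add: annulus_neg)
    also have "pp \<alpha> ((-a) + (-b)) = - pp \<alpha> (a+b)" by (simp add: pp_odd[symmetric])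
    finally show ?thesis by (simp add: pp_odd c0_def)
  qed
qed

lemma Dsq_identity:
  fixes x1 x2 e1 e2 :: real
  assumes "x1 \<noteq> 0" "x2 \<noteq> 0" "x1 + x2 \<noteq> 0"
  shows "(2*e1/x1 - 2*e2/x2)\<^sup>2 = 4 * (e1\<^sup>2/x1 + e2\<^sup>2/x2 - (e1+e2)\<^sup>2/(x1+x2)) * (x1+x2) / (x1*x2)"
proof -
  have l: "(2*e1/x1 - 2*e2/x2)\<^sup>2 = 4 * (e1*x2 - e2*x1)\<^sup>2 / (x1*x2)\<^sup>2"
    using assms by (simp add: field_simps power2_eq_square)
  have p: "e1\<^sup>2/x1 + e2\<^sup>2/x2 - (e1+e2)\<^sup>2/(x1+x2) = (e1*x2 - e2*x1)\<^sup>2 / (x1*x2*(x1+x2))"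
    using assms by (simp add: field_simps power2_eq_square)
  have g: "4 * w / (x1*x2)\<^sup>2 = 4 * (w / (x1*x2*(x1+x2))) * (x1+x2) / (x1*x2)" for w
  proof -
    have "w / (x1*x2*(x1+x2)) * (x1+x2) = w * (x1+x2) / ((x1*x2)*(x1+x2))" by simp
    also have "\<dots> = w / (x1*x2)" by (rule mult_divide_mult_cancel_right) (use assms in simp)
    finally have "w / (x1*x2*(x1+x2)) * (x1+x2) = w / (x1*x2)" .
    then have "4 * (w / (x1*x2*(x1+x2))) * (x1+x2) / (x1*x2) = 4 * (w / (x1*x2)) / (x1*x2)"
      by (metis mult.assoc)
    then show ?thesis by (simp add: power2_eq_square)
  qed
  show ?thesis unfolding l p by (rule g)
qed

lemma omega_pp: "omega \<alpha> \<xi> \<eta> = pp \<alpha> \<xi> + \<eta>\<^sup>2/\<xi>"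
  by (simp add: omega_def pp_def)

lemma D_lower:
  fixes \<alpha> K N1 N2 N3 L1 L2 L3 \<tau> \<xi> \<eta> \<xi>1 \<eta>1 :: real
  assumes "\<alpha> \<ge> 1" "K \<ge> 1" "N1 > 0" "N2 > 0" "N3 > 0"
    "N1 \<le> K*N3" "N3 \<le> K*N1" "N2 \<le> K*N1"
    "\<xi>1 \<in> annulus N1" "\<xi> - \<xi>1 \<in> annulus N2" "\<xi> \<in> annulus N3"
    "\<bar>\<tau> - omega \<alpha> \<xi> \<eta>\<bar> \<le> L3"
    "\<bar>\<tau> - omega \<alpha> \<xi>1 \<eta>1 - omega \<alpha> (\<xi>-\<xi>1) (\<eta>-\<eta>1)\<bar> \<le> L1 + L2"
    "L1 + L2 + L3 \<le> c0 K \<alpha> / 2 * N1 powr \<alpha> * N2"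
  shows "sqrt (c0 K \<alpha> / (32*K)) * N1 powr (\<alpha>/2) \<le> \<bar>2*\<eta>1/\<xi>1 - 2*(\<eta>-\<eta>1)/(\<xi>-\<xi>1)\<bar>"
proof -
  define x1 where "x1 = \<xi>1"
  define x2 where "x2 = \<xi> - \<xi>1"
  define e1 where "e1 = \<eta>1"
  define e2 where "e2 = \<eta> - \<eta>1"
  define c where "c = c0 K \<alpha>"
  have cpos: "c > 0" using assms c0_pos by (simp add: c_def)
  have x1A: "x1 \<in> annulus N1" and x2A: "x2 \<in> annulus N2" and x12A: "x1 + x2 \<in> annulus N3"
    using assms by (auto simp: x1_def x2_def)
  have nz: "x1 \<noteq> 0" "x2 \<noteq> 0" "x1 + x2 \<noteq> 0"
    using annulus_pos x1A x2A x12A assms by auto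
  define Phi where "Phi = pp \<alpha> x1 + pp \<alpha> x2 - pp \<alpha> (x1+x2)"
  define Psi where "Psi = e1\<^sup>2/x1 + e2\<^sup>2/x2 - (e1+e2)\<^sup>2/(x1+x2)"
  have Phil: "c * N1 powr \<alpha> * N2 \<le> \<bar>Phi\<bar>"
    unfolding Phi_def c_def by (rule Phi_lower[OF assms(1-8) x1A x2A x12A])
  have sum: "Phi + Psi = omega \<alpha> \<xi>1 \<eta>1 + omega \<alpha> (\<xi>-\<xi>1) (\<eta>-\<eta>1) - omega \<alpha> \<xi> \<eta>"
    by (simp add: Phi_def Psi_def omega_pp x1_def x2_def e1_def e2_def)
  have "\<bar>Phi + Psi\<bar> \<le> L1 + L2 + L3" unfolding sum using assms(12,13) by linarith
  then have Psil: "\<bar>Psi\<bar> \<ge> c/2 * N1 powr \<alpha> * N2" using Phil assms(14) unfolding c_def by linarith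
  have D2: "(2*e1/x1 - 2*e2/x2)\<^sup>2 = 4 * \<bar>Psi\<bar> * \<bar>x1+x2\<bar> / (\<bar>x1\<bar>*\<bar>x2\<bar>)"
  proof -
    have "(2*e1/x1 - 2*e2/x2)\<^sup>2 = 4 * Psi * (x1+x2) / (x1*x2)"
      unfolding Psi_def by (rule Dsq_identity[OF nz])
    moreover have "4 * Psi * (x1+x2) / (x1*x2) = \<bar>4 * Psi * (x1+x2) / (x1*x2)\<bar>"
      using calculation by (metis abs_of_nonneg zero_le_power2)
    moreover have "\<bar>4 * Psi * (x1+x2) / (x1*x2)\<bar> = 4 * \<bar>Psi\<bar> * \<bar>x1+x2\<bar> / (\<bar>x1\<bar>*\<bar>x2\<bar>)"
      by (simp add: abs_mult)
    ultimately show ?thesis by simp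
  qed
  have bx: "\<bar>x1\<bar> \<le> 4*N1" "\<bar>x2\<bar> \<le> 4*N2" "\<bar>x1+x2\<bar> \<ge> N3/4" using x1A x2A x12A by (auto simp: annulus_def)
  have Npos: "N1 powr \<alpha> > 0" using assms by simp
  have "c / (32*K) * N1 powr \<alpha> \<le> 4 * (c/2 * N1 powr \<alpha> * N2) * (N3/4) / ((4*N1)*(4*N2))"
  proof -
    have eq1: "4 * (c/2 * N1 powr \<alpha> * N2) * (N3/4) / ((4*N1)*(4*N2)) = c * N1 powr \<alpha> * (N3 / N1) / 32"
      using assms by (simp add: field_simps)
    have "N3 / N1 \<ge> 1/K" using assms by (simp add: field_simps)
    have eq2: "c / (32*K) * N1 powr \<alpha> = c * N1 powr \<alpha> * (1/K) / 32" by simp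
    have "c * N1 powr \<alpha> * (1/K) \<le> c * N1 powr \<alpha> * (N3/N1)"
      by (rule mult_left_mono) (use cpos Npos \<open>N3 / N1 \<ge> 1/K\<close> in auto)
    then have "c * N1 powr \<alpha> * (1/K) / 32 \<le> c * N1 powr \<alpha> * (N3/N1) / 32"
      by (rule divide_right_mono) simp
    then show ?thesis unfolding eq1 eq2 .
  qed
  also have "\<dots> \<le> 4 * \<bar>Psi\<bar> * \<bar>x1+x2\<bar> / (\<bar>x1\<bar>*\<bar>x2\<bar>)"
  proof -
    have p1: "0 \<le> c/2 * N1 powr \<alpha> * N2" using cpos Npos assms by simp
    have "4 * (c/2 * N1 powr \<alpha> * N2) * (N3/4) \<le> 4 * \<bar>Psi\<bar> * \<bar>x1+x2\<bar>"
      using Psil bx p1 assms by (intro mult_mono mult_left_mono) auto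
    moreover have "\<bar>x1\<bar>*\<bar>x2\<bar> \<le> (4*N1)*(4*N2)" using bx by (intro mult_mono) auto
    moreover have "\<bar>x1\<bar>*\<bar>x2\<bar> > 0" using nz by simp
    ultimately show ?thesis using p1 assms
      by (meson frac_le mult_nonneg_nonneg abs_ge_zero zero_le_numeral order_trans)
  qed
  finally have "c / (32*K) * N1 powr \<alpha> \<le> (2*e1/x1 - 2*e2/x2)\<^sup>2" using D2 by simp
  then have "sqrt (c / (32*K) * N1 powr \<alpha>) \<le> \<bar>2*e1/x1 - 2*e2/x2\<bar>"
    using real_sqrt_le_mono by fastforce
  moreover have "sqrt (c / (32*K) * N1 powr \<alpha>) = sqrt (c / (32*K)) * N1 powr (\<alpha>/2)"
  proof -
    have "N1 powr \<alpha> = (N1 powr (\<alpha>/2))\<^sup>2"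
      by (simp add: power2_eq_square powr_add[symmetric])
    have "sqrt (c / (32*K) * (N1 powr (\<alpha>/2))\<^sup>2) = sqrt (c / (32*K)) * sqrt ((N1 powr (\<alpha>/2))\<^sup>2)"
      by (rule real_sqrt_mult)
    also have "sqrt ((N1 powr (\<alpha>/2))\<^sup>2) = N1 powr (\<alpha>/2)" by simp
    finally have "sqrt (c / (32*K) * (N1 powr (\<alpha>/2))\<^sup>2) = sqrt (c / (32*K)) * N1 powr (\<alpha>/2)" .
    then show ?thesis unfolding \<open>N1 powr \<alpha> = (N1 powr (\<alpha>/2))\<^sup>2\<close> .
  qed
  ultimately show ?thesis by (simp add: c_def x1_def x2_def e1_def e2_def)
qed



lemma sets_eta: "sets (eta_measure torus) = (if torus then Pow \<int> else sets borel)"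
  by (simp add: eta_measure_def)

lemma eta_borel: "f \<in> measurable M (eta_measure torus) \<Longrightarrow> f \<in> borel_measurable M"
proof -
  assume f: "f \<in> measurable M (eta_measure torus)"
  have "(\<lambda>x. x) \<in> measurable (eta_measure torus) borel"
    by (cases torus) (auto simp: eta_measure_def)
  from measurable_comp[OF f this] show ?thesis by (simp add: comp_def)
qed

lemma sigma_finite_eta: "sigma_finite_measure (eta_measure torus)"
  by (cases torus) (auto simp: eta_measure_def intro: sigma_finite_measure_count_space_countable countable_int lborel.sigma_finite_measure_axioms)

lemma omega_meas[measurable]:
  assumes [measurable]: "f \<in> borel_measurable M" "g \<in> borel_measurable M"
  shows "(\<lambda>y. omega \<alpha> (f y) (g y)) \<in> borel_measurable M"
  unfolding omega_def by measurable

lemma eta_snd_meas[measurable]: "(\<lambda>y. snd (snd y)) \<in> borel_measurable (freq_measure torus)"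
  unfolding freq_measure_def by (rule eta_borel[where torus=torus]) (rule measurable_compose[OF measurable_snd measurable_snd])

lemma tau_meas[measurable]: "fst \<in> borel_measurable (freq_measure torus)"
proof -
  have "fst \<in> measurable (lborel \<Otimes>\<^sub>M (lborel \<Otimes>\<^sub>M eta_measure torus)) lborel" by (rule measurable_fst)
  then show ?thesis unfolding freq_measure_def by simp
qed

lemma xi_meas[measurable]: "(\<lambda>y. fst (snd y)) \<in> borel_measurable (freq_measure torus)"
proof -
  have "(\<lambda>y. fst (snd y)) \<in> measurable (lborel \<Otimes>\<^sub>M (lborel \<Otimes>\<^sub>M eta_measure torus)) lborel"
    by (rule measurable_compose[OF measurable_snd measurable_fst])
  then show ?thesis unfolding freq_measure_def by simp
qed


lemma space_eta: "space (eta_measure torus) = (if torus then \<int> else UNIV)"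
  by (simp add: eta_measure_def)

lemma space_freq: "space (freq_measure torus) = UNIV \<times> UNIV \<times> space (eta_measure torus)"
  by (simp add: freq_measure_def space_pair_measure)

lemma eta_sub_meas:
  assumes a: "a \<in> measurable M (eta_measure torus)" and b: "b \<in> measurable M (eta_measure torus)"
  shows "(\<lambda>z. a z - b z) \<in> measurable M (eta_measure torus)"
proof (cases torus)
  case True
  have ab: "(\<lambda>z. (a z, b z)) \<in> measurable M (count_space \<int> \<Otimes>\<^sub>M count_space \<int>)"
    using a b True by (auto simp: eta_measure_def intro!: measurable_Pair)
  have "(\<lambda>(p::real, q). p - q) \<in> measurable (count_space (\<int> \<times> \<int>)) (count_space \<int>)"
    by auto
  then have "(\<lambda>(p::real, q). p - q) \<in> measurable (count_space \<int> \<Otimes>\<^sub>M count_space \<int>) (count_space \<int>)"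
    by (simp add: pair_measure_countable countable_int)
  from measurable_compose[OF ab this] show ?thesis using True by (simp add: eta_measure_def)
next
  case False
  then show ?thesis using a b by (simp add: eta_measure_def)
qed

lemma freq_sub_meas:
  assumes f: "f \<in> measurable M (freq_measure torus)" and g: "g \<in> measurable M (freq_measure torus)"
  shows "(\<lambda>z. f z - g z) \<in> measurable M (freq_measure torus)"
proof -
  have f1: "(\<lambda>z. fst (f z)) \<in> borel_measurable M" and g1: "(\<lambda>z. fst (g z)) \<in> borel_measurable M"
    using f g by (auto simp: freq_measure_def measurable_pair_iff o_def)
  have f2: "(\<lambda>z. fst (snd (f z))) \<in> borel_measurable M" and g2: "(\<lambda>z. fst (snd (g z))) \<in> borel_measurable M"
    using f g by (auto simp: freq_measure_def measurable_pair_iff o_def)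
  have f3: "(\<lambda>z. snd (snd (f z))) \<in> measurable M (eta_measure torus)"
    and g3: "(\<lambda>z. snd (snd (g z))) \<in> measurable M (eta_measure torus)"
    using f g by (auto simp: freq_measure_def measurable_pair_iff o_def)
  have eq: "(\<lambda>z. f z - g z) = (\<lambda>z. (fst (f z) - fst (g z), fst (snd (f z)) - fst (snd (g z)), snd (snd (f z)) - snd (snd (g z))))"
    by (auto simp: fun_eq_iff prod_eq_iff)
  show ?thesis unfolding eq freq_measure_def
    using f1 g1 f2 g2 eta_sub_meas[OF f3 g3]
    by (intro measurable_Pair) (auto)
qed

lemma distr_shift_lborel: "distr lborel lborel (\<lambda>t::real. t - c) = lborel"
proof -
  have "distr lborel lborel (\<lambda>t::real. t - c) = distr lborel borel ((+) (-c))"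
    by (rule distr_cong) auto
  also have "\<dots> = lborel" by (rule lborel_distr_plus)
  finally show ?thesis .
qed

lemma distr_shift_eta:
  assumes "c \<in> space (eta_measure torus)"
  shows "distr (eta_measure torus) (eta_measure torus) (\<lambda>t. t - c) = eta_measure torus"
proof (cases torus)
  case True
  have c: "c \<in> \<int>" using assms True by (simp add: eta_measure_def)
  have "bij_betw (\<lambda>t. t - c) \<int> \<int>"
    by (rule bij_betwI[where g="\<lambda>t. t + c"]) (use c in auto)
  then show ?thesis using True by (simp add: eta_measure_def distr_bij_count_space)
next
  case False
  then show ?thesis by (simp add: eta_measure_def distr_shift_lborel)
qed

lemma sigma_finite_lborel': "sigma_finite_measure (lborel :: real measure)"
  by (rule lborel.sigma_finite_measure_axioms)

lemma distr_shift_freq: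
  assumes "y \<in> space (freq_measure torus)"
  shows "distr (freq_measure torus) (freq_measure torus) (\<lambda>x. x - y) = freq_measure torus"
proof -
  obtain a b c where y: "y = (a, b, c)" by (cases y) auto
  have c: "c \<in> space (eta_measure torus)" using assms y by (simp add: space_freq)
  have m1: "(\<lambda>t::real. t - a) \<in> measurable lborel lborel" by simp
  have m2: "(\<lambda>t::real. t - b) \<in> measurable lborel lborel" by simp
  have m3: "(\<lambda>t. t - c) \<in> measurable (eta_measure torus) (eta_measure torus)"
    by (rule eta_sub_meas) (auto intro: measurable_const c)
  have sf3: "sigma_finite_measure (distr (eta_measure torus) (eta_measure torus) (\<lambda>t. t - c))"
    using distr_shift_eta[OF c] sigma_finite_eta by simp
  have i: "lborel \<Otimes>\<^sub>M eta_measure torus = distr (lborel \<Otimes>\<^sub>M eta_measure torus) (lborel \<Otimes>\<^sub>M eta_measure torus) (\<lambda>(x, z). (x - b, z - c))"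
    using pair_measure_distr[OF m2 m3 sf3] distr_shift_eta[OF c] distr_shift_lborel[of b] by simp
  have m23: "(\<lambda>(x, z). (x - b, z - c)) \<in> measurable (lborel \<Otimes>\<^sub>M eta_measure torus) (lborel \<Otimes>\<^sub>M eta_measure torus)"
    using m2 m3 by measurable
  have sf23: "sigma_finite_measure (distr (lborel \<Otimes>\<^sub>M eta_measure torus) (lborel \<Otimes>\<^sub>M eta_measure torus) (\<lambda>(x, z). (x - b, z - c)))"
    using i[symmetric] sigma_finite_eta
    by (simp add: sigma_finite_pair_measure sigma_finite_lborel')
  have "freq_measure torus = distr lborel lborel (\<lambda>t. t - a) \<Otimes>\<^sub>M distr (lborel \<Otimes>\<^sub>M eta_measure torus) (lborel \<Otimes>\<^sub>M eta_measure torus) (\<lambda>(x, z). (x - b, z - c))"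
    unfolding freq_measure_def distr_shift_lborel using i by simp
  also have "\<dots> = distr (freq_measure torus) (freq_measure torus) (\<lambda>(t, w). (t - a, (\<lambda>(x, z). (x - b, z - c)) w))"
    unfolding freq_measure_def by (rule pair_measure_distr[OF m1 m23 sf23])
  also have "\<dots> = distr (freq_measure torus) (freq_measure torus) (\<lambda>x. x - y)"
    by (rule distr_cong) (auto simp: y)
  finally show ?thesis by simp
qed

lemma shift_meas:
  assumes "y \<in> space (freq_measure torus)"
  shows "(\<lambda>x. x - y) \<in> measurable (freq_measure torus) (freq_measure torus)"
  by (rule freq_sub_meas) (use assms in auto)

lemma nn_integral_shift:
  assumes y: "y \<in> space (freq_measure torus)" and h: "h \<in> borel_measurable (freq_measure torus)"
  shows "(\<integral>\<^sup>+x. h (x - y) \<partial>freq_measure torus) = (\<integral>\<^sup>+x. h x \<partial>freq_measure torus)"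
proof -
  have "(\<integral>\<^sup>+x. h x \<partial>freq_measure torus) = (\<integral>\<^sup>+x. h x \<partial>distr (freq_measure torus) (freq_measure torus) (\<lambda>x. x - y))"
    using distr_shift_freq[OF y] by simp
  also have "\<dots> = (\<integral>\<^sup>+x. h (x - y) \<partial>freq_measure torus)"
    by (rule nn_integral_distr[OF shift_meas[OF y]]) (use h in simp)
  finally show ?thesis by simp
qed


lemma conv_norm_bound:
  "ennreal (norm (conv torus f1 f2 x)) \<le> (\<integral>\<^sup>+y. ennreal (norm (f1 y * f2 (x - y))) \<partial>freq_measure torus)"
proof (cases "integrable (freq_measure torus) (\<lambda>y. f1 y * f2 (x - y))")
  case True
  then show ?thesis unfolding conv_def by (rule integral_norm_bound_ennreal)
next
  case False
  then show ?thesis unfolding conv_def by (simp add: not_integrable_integral_eq)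
qed

lemma conv_main:
  fixes f1 f2 :: "real \<times> real \<times> real \<Rightarrow> complex" and D3 :: "(real \<times> real \<times> real) set"
    and e :: "real \<times> real \<times> real \<Rightarrow> real \<times> real \<times> real \<Rightarrow> ennreal"
  assumes f1: "f1 \<in> borel_measurable (freq_measure torus)"
    and f2: "f2 \<in> borel_measurable (freq_measure torus)"
    and D3: "D3 \<subseteq> space (freq_measure torus)"
    and em: "\<And>x. x \<in> D3 \<Longrightarrow> (\<lambda>y. e x y) \<in> borel_measurable (freq_measure torus)"
    and eb: "\<And>x. x \<in> D3 \<Longrightarrow> (\<integral>\<^sup>+y. (e x y)\<^sup>2 \<partial>freq_measure torus) \<le> Cst"
    and ee: "\<And>x y. x \<in> D3 \<Longrightarrow> ennreal (norm (f1 y * f2 (x - y))) = e x y * ennreal (norm (f1 y) * norm (f2 (x - y)))"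
  shows "(\<integral>\<^sup>+x. ennreal ((cmod (indicator D3 x * conv torus f1 f2 x))\<^sup>2) \<partial>freq_measure torus)
     \<le> Cst * (\<integral>\<^sup>+x. ennreal ((cmod (f1 x))\<^sup>2) \<partial>freq_measure torus) * (\<integral>\<^sup>+x. ennreal ((cmod (f2 x))\<^sup>2) \<partial>freq_measure torus)"
proof -
  let ?M = "freq_measure torus"
  define F where "F = (\<lambda>(x, y). ennreal ((cmod (f1 y))\<^sup>2 * (cmod (f2 (x - y)))\<^sup>2))"
  have subm: "(\<lambda>p. fst p - snd p) \<in> measurable (?M \<Otimes>\<^sub>M ?M) ?M"
    by (rule freq_sub_meas) auto
  have f2m: "(\<lambda>p. f2 (fst p - snd p)) \<in> borel_measurable (?M \<Otimes>\<^sub>M ?M)"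
    using measurable_compose[OF subm f2] by (simp add: o_def)
  have f1m: "(\<lambda>p. f1 (snd p)) \<in> borel_measurable (?M \<Otimes>\<^sub>M ?M)"
    using measurable_compose[OF measurable_snd[of ?M ?M] f1] by (simp add: o_def)
  have Fm: "F \<in> borel_measurable (?M \<Otimes>\<^sub>M ?M)"
  proof -
    have "F = (\<lambda>p. ennreal ((cmod (f1 (snd p)))\<^sup>2 * (cmod (f2 (fst p - snd p)))\<^sup>2))"
      by (auto simp: F_def fun_eq_iff)
    then show ?thesis using f1m f2m by simp
  qed
  have pw: "ennreal ((cmod (indicator D3 x * conv torus f1 f2 x))\<^sup>2) \<le> Cst * (\<integral>\<^sup>+y. F (x, y) \<partial>?M)"
    if x: "x \<in> space ?M" for x
  proof (cases "x \<in> D3")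
    case False
    then show ?thesis by simp
  next
    case True
    have xm: "(\<lambda>y. x - y) \<in> measurable ?M ?M"
      by (rule freq_sub_meas) (use x in auto)
    define g where "g = (\<lambda>y. ennreal (norm (f1 y) * norm (f2 (x - y))))"
    have gm: "g \<in> borel_measurable ?M"
      unfolding g_def using measurable_compose[OF xm f2] f1 by (simp add: o_def)
    have "ennreal ((cmod (indicator D3 x * conv torus f1 f2 x))\<^sup>2) = (ennreal (norm (conv torus f1 f2 x)))\<^sup>2"
      using True by (simp add: ennreal_power)
    also have "\<dots> \<le> (\<integral>\<^sup>+y. ennreal (norm (f1 y * f2 (x - y))) \<partial>?M)\<^sup>2"
      by (rule power_mono[OF conv_norm_bound]) simp
    also have "(\<integral>\<^sup>+y. ennreal (norm (f1 y * f2 (x - y))) \<partial>?M) = (\<integral>\<^sup>+y. e x y * g y \<partial>?M)"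
      using ee[OF True] by (simp add: g_def)
    also have "(\<dots>)\<^sup>2 \<le> (\<integral>\<^sup>+y. (e x y)\<^sup>2 \<partial>?M) * (\<integral>\<^sup>+y. (g y)\<^sup>2 \<partial>?M)"
      by (rule Cauchy_Schwarz_nn_integral[OF em[OF True] gm])
    also have "\<dots> \<le> Cst * (\<integral>\<^sup>+y. (g y)\<^sup>2 \<partial>?M)"
      by (rule mult_right_mono[OF eb[OF True]]) simp
    also have "(\<integral>\<^sup>+y. (g y)\<^sup>2 \<partial>?M) = (\<integral>\<^sup>+y. F (x, y) \<partial>?M)"
      unfolding g_def F_def by (intro nn_integral_cong) (simp add: ennreal_power power_mult_distrib)
    finally show ?thesis .
  qed
  have sfM: "sigma_finite_measure ?M"
    unfolding freq_measure_def
    by (intro sigma_finite_pair_measure sigma_finite_lborel' sigma_finite_eta)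
  interpret P: pair_sigma_finite ?M ?M
    using sfM by (simp add: pair_sigma_finite_def)
  have "(\<integral>\<^sup>+x. ennreal ((cmod (indicator D3 x * conv torus f1 f2 x))\<^sup>2) \<partial>?M) \<le> (\<integral>\<^sup>+x. Cst * (\<integral>\<^sup>+y. F (x, y) \<partial>?M) \<partial>?M)"
    by (rule nn_integral_mono) (rule pw)
  also have "\<dots> = Cst * (\<integral>\<^sup>+x. (\<integral>\<^sup>+y. F (x, y) \<partial>?M) \<partial>?M)"
    by (rule nn_integral_cmult) (use sigma_finite_measure.borel_measurable_nn_integral_fst[OF sfM Fm] in simp)
  also have "(\<integral>\<^sup>+x. (\<integral>\<^sup>+y. F (x, y) \<partial>?M) \<partial>?M) = (\<integral>\<^sup>+y. (\<integral>\<^sup>+x. F (x, y) \<partial>?M) \<partial>?M)"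
    by (rule P.Fubini[OF Fm, symmetric])
  also have "\<dots> = (\<integral>\<^sup>+y. ennreal ((cmod (f1 y))\<^sup>2) * (\<integral>\<^sup>+x. ennreal ((cmod (f2 x))\<^sup>2) \<partial>?M) \<partial>?M)"
  proof (rule nn_integral_cong)
    fix y assume y: "y \<in> space ?M"
    have h: "(\<lambda>x. ennreal ((cmod (f2 x))\<^sup>2)) \<in> borel_measurable ?M" using f2 by simp
    have "(\<integral>\<^sup>+x. F (x, y) \<partial>?M) = (\<integral>\<^sup>+x. ennreal ((cmod (f1 y))\<^sup>2) * ennreal ((cmod (f2 (x - y)))\<^sup>2) \<partial>?M)"
      by (simp add: F_def ennreal_mult)
    also have "\<dots> = ennreal ((cmod (f1 y))\<^sup>2) * (\<integral>\<^sup>+x. ennreal ((cmod (f2 (x - y)))\<^sup>2) \<partial>?M)"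
      by (rule nn_integral_cmult) (use measurable_compose[OF shift_meas[OF y] h] in \<open>simp add: o_def\<close>)
    also have "(\<integral>\<^sup>+x. ennreal ((cmod (f2 (x - y)))\<^sup>2) \<partial>?M) = (\<integral>\<^sup>+x. ennreal ((cmod (f2 x))\<^sup>2) \<partial>?M)"
      by (rule nn_integral_shift[OF y h])
    finally show "(\<integral>\<^sup>+x. F (x, y) \<partial>?M) = ennreal ((cmod (f1 y))\<^sup>2) * (\<integral>\<^sup>+x. ennreal ((cmod (f2 x))\<^sup>2) \<partial>?M)" .
  qed
  also have "\<dots> = (\<integral>\<^sup>+y. ennreal ((cmod (f1 y))\<^sup>2) \<partial>?M) * (\<integral>\<^sup>+x. ennreal ((cmod (f2 x))\<^sup>2) \<partial>?M)"
    by (rule nn_integral_multc) (use f1 in simp)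
  finally show ?thesis by (simp add: mult.assoc)
qed


definition L2n :: "ennreal \<Rightarrow> ennreal" where
  "L2n J = (if J = \<infinity> then \<infinity> else ennreal (sqrt (enn2real J)))"

lemma L2norm_L2n: "L2norm torus f = L2n (\<integral>\<^sup>+x. ennreal ((cmod (f x))\<^sup>2) \<partial>freq_measure torus)"
  by (simp add: L2norm_def L2n_def Let_def)

lemma L2n_zero_iff: "L2n J = 0 \<longleftrightarrow> J = 0"
  by (cases J) (auto simp: L2n_def)



lemma L2n_final':
  fixes c :: real
  assumes c: "c > 0" and I: "I \<le> ennreal (c\<^sup>2) * I1 * I2"
  shows "L2n I \<le> ennreal c * L2n I1 * L2n I2"
proof (cases "I1 = \<infinity> \<or> I2 = \<infinity>")
  case True
  show ?thesis
  proof (cases "I1 = 0 \<or> I2 = 0")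
    case True
    then have "I = 0" using I by auto
    then show ?thesis by (simp add: L2n_def)
  next
    case False
    then have a: "L2n I1 \<noteq> 0" "L2n I2 \<noteq> 0" by (auto simp: L2n_zero_iff)
    have b: "L2n I1 = \<infinity> \<or> L2n I2 = \<infinity>" using True by (auto simp: L2n_def)
    have "ennreal c * L2n I1 * L2n I2 = \<infinity>" using c a b
      unfolding ennreal_mult_eq_top_iff by auto
    then show ?thesis by simp
  qed
next
  case False
  then obtain i1 i2 where i: "I1 = ennreal i1" "I2 = ennreal i2" "i1 \<ge> 0" "i2 \<ge> 0"
    by (cases I1; cases I2) auto
  have le: "I \<le> ennreal (c\<^sup>2 * i1 * i2)" using I i c by (simp add: ennreal_mult)
  have nt: "I \<noteq> \<infinity>" using le by (auto simp: top_unique)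
  obtain r where r: "I = ennreal r" "r \<ge> 0" using nt by (cases I) auto
  have rle: "r \<le> c\<^sup>2 * i1 * i2" using le r i by (simp add: ennreal_le_iff)
  have "sqrt r \<le> sqrt (c\<^sup>2 * i1 * i2)" using rle by simp
  also have "\<dots> = c * sqrt i1 * sqrt i2" using c i by (simp add: real_sqrt_mult)
  finally have "sqrt r \<le> c * sqrt i1 * sqrt i2" .
  then show ?thesis using r i c by (simp add: L2n_def ennreal_mult[symmetric])
qed


lemma eta_cover:
  fixes q Dd :: "real \<Rightarrow> real" and T :: "real set"
  assumes qd: "\<And>u v. q v - q u = (v - u) * (Dd u + Dd v) / 2"
    and sv: "sv > 0" and TD: "\<And>u. u \<in> T \<Longrightarrow> sv \<le> \<bar>Dd u\<bar>"
    and Tq: "\<And>u v. u \<in> T \<Longrightarrow> v \<in> T \<Longrightarrow> \<bar>q v - q u\<bar> \<le> M"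
  shows "\<exists>a b. T \<subseteq> {a - M/sv..a + M/sv} \<union> {b - M/sv..b + M/sv}"
proof -
  have key: "\<bar>v - u\<bar> \<le> M/sv"
    if u: "u \<in> T" and v: "v \<in> T" and sg: "(Dd u \<ge> sv \<and> Dd v \<ge> sv) \<or> (Dd u \<le> -sv \<and> Dd v \<le> -sv)" for u v
  proof -
    have ge: "2 * sv \<le> \<bar>Dd u + Dd v\<bar>" using sg by auto
    have "\<bar>q v - q u\<bar> = (\<bar>v - u\<bar>) * (\<bar>Dd u + Dd v\<bar>) / 2" by (simp add: qd abs_mult)
    also have "\<dots> \<ge> (\<bar>v - u\<bar>) * (2 * sv) / 2"
      by (intro divide_right_mono mult_left_mono) (use ge in auto)
    finally have "\<bar>v - u\<bar> * sv \<le> M" using Tq[OF u v] by simp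
    then show ?thesis using sv by (simp add: field_simps)
  qed
  define Tp where "Tp = {u\<in>T. Dd u \<ge> sv}"
  define Tm where "Tm = {u\<in>T. Dd u \<le> -sv}"
  have TT: "T = Tp \<union> Tm"
  proof
    show "T \<subseteq> Tp \<union> Tm"
    proof
      fix x assume x: "x \<in> T"
      have "sv \<le> \<bar>Dd x\<bar>" using TD[OF x] .
      then have "Dd x \<ge> sv \<or> Dd x \<le> - sv" by linarith
      then show "x \<in> Tp \<union> Tm" using x by (auto simp: Tp_def Tm_def)
    qed
  qed (auto simp: Tp_def Tm_def)
  obtain a where a: "Tp \<subseteq> {a - M/sv..a + M/sv}"
  proof (cases "Tp = {}")
    case True then show ?thesis using that by auto
  next
    case False
    then obtain a where "a \<in> Tp" by auto
    then have "Tp \<subseteq> {a - M/sv..a + M/sv}"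
      using key by (fastforce simp: Tp_def abs_le_iff)
    then show ?thesis using that by auto
  qed
  obtain b where b: "Tm \<subseteq> {b - M/sv..b + M/sv}"
  proof (cases "Tm = {}")
    case True then show ?thesis using that by auto
  next
    case False
    then obtain b where "b \<in> Tm" by auto
    then have "Tm \<subseteq> {b - M/sv..b + M/sv}"
      using key by (fastforce simp: Tm_def abs_le_iff)
    then show ?thesis using that by auto
  qed
  show ?thesis using a b TT by blast
qed

lemma card_int_interval:
  fixes a d :: real assumes "d \<ge> 0"
  shows "finite ({a-d..a+d} \<inter> \<int>) \<and> real (card ({a-d..a+d} \<inter> \<int>)) \<le> 2*d + 1"
proof -
  have sub: "{a-d..a+d} \<inter> \<int> \<subseteq> real_of_int ` {\<lceil>a-d\<rceil>..\<lfloor>a+d\<rfloor>}"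
  proof
    fix x assume x: "x \<in> {a-d..a+d} \<inter> \<int>"
    then obtain k where k: "x = real_of_int k" by (auto elim: Ints_cases)
    have "\<lceil>a-d\<rceil> \<le> k" using x k by (simp add: ceiling_le_iff)
    moreover have "k \<le> \<lfloor>a+d\<rfloor>" using x k by (simp add: le_floor_iff)
    ultimately show "x \<in> real_of_int ` {\<lceil>a-d\<rceil>..\<lfloor>a+d\<rfloor>}" using k by auto
  qed
  have fin: "finite ({a-d..a+d} \<inter> \<int>)" by (rule finite_subset[OF sub]) auto
  have "card ({a-d..a+d} \<inter> \<int>) \<le> card (real_of_int ` {\<lceil>a-d\<rceil>..\<lfloor>a+d\<rfloor>})"
    by (rule card_mono[OF _ sub]) auto
  also have "\<dots> \<le> card {\<lceil>a-d\<rceil>..\<lfloor>a+d\<rfloor>}" by (rule card_image_le) auto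
  also have "\<dots> = nat (\<lfloor>a+d\<rfloor> + 1 - \<lceil>a-d\<rceil>)" by simp
  finally have c: "real (card ({a-d..a+d} \<inter> \<int>)) \<le> real (nat (\<lfloor>a+d\<rfloor> + 1 - \<lceil>a-d\<rceil>))" by linarith
  have "real (nat (\<lfloor>a+d\<rfloor> + 1 - \<lceil>a-d\<rceil>)) \<le> 2*d + 1"
  proof (cases "\<lfloor>a+d\<rfloor> + 1 - \<lceil>a-d\<rceil> \<ge> 0")
    case True
    then have "real (nat (\<lfloor>a+d\<rfloor> + 1 - \<lceil>a-d\<rceil>)) = real_of_int \<lfloor>a+d\<rfloor> + 1 - real_of_int \<lceil>a-d\<rceil>" by simp
    moreover have "real_of_int \<lfloor>a+d\<rfloor> \<le> a + d" by simp
    moreover have "real_of_int \<lceil>a-d\<rceil> \<ge> a - d" by simp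
    ultimately show ?thesis by linarith
  next
    case False
    then show ?thesis using assms by simp
  qed
  with c fin show ?thesis by linarith
qed

definition Bd :: "bool \<Rightarrow> real \<Rightarrow> real" where
  "Bd torus d = (if torus then 4*d + 2 else 4*d)"

lemma eta_int_interval:
  fixes a d :: real assumes "d \<ge> 0"
  shows "(\<integral>\<^sup>+\<eta>. indicator {a-d..a+d} \<eta> \<partial>eta_measure torus) \<le> ennreal (if torus then 2*d+1 else 2*d)"
proof (cases torus)
  case True
  have "(\<integral>\<^sup>+\<eta>. indicator {a-d..a+d} \<eta> \<partial>eta_measure torus) = (\<integral>\<^sup>+\<eta>. indicator ({a-d..a+d} \<inter> \<int>) \<eta> \<partial>count_space \<int>)"
    unfolding eta_measure_def using True by (simp only: if_True) (intro nn_integral_cong, auto split: split_indicator)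
  also have "\<dots> = emeasure (count_space \<int>) ({a-d..a+d} \<inter> \<int>)"
    by (rule nn_integral_indicator) auto
  also have "\<dots> = ennreal (real (card ({a-d..a+d} \<inter> \<int>)))"
    using card_int_interval[OF assms, of a] by (simp add: emeasure_count_space_finite ennreal_of_nat_eq_real_of_nat)
  also have "\<dots> \<le> ennreal (2*d+1)" using card_int_interval[OF assms, of a] by (intro ennreal_leI) auto
  finally show ?thesis using True by simp
next
  case False
  have "(\<integral>\<^sup>+\<eta>. indicator {a-d..a+d} \<eta> \<partial>eta_measure torus) = emeasure lborel {a-d..a+d}"
    using False by (simp add: eta_measure_def)
  also have "\<dots> = ennreal (2*d)" using assms by simp
  finally show ?thesis using False by simp
qed

lemma eta_count:
  fixes T :: "real set"
  assumes T: "T \<subseteq> {a-d..a+d} \<union> {b-d..b+d}" and d: "d \<ge> 0"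
  shows "(\<integral>\<^sup>+\<eta>. indicator T \<eta> \<partial>eta_measure torus) \<le> ennreal (Bd torus d)"
proof -
  have "(\<integral>\<^sup>+\<eta>. indicator T \<eta> \<partial>eta_measure torus)
      \<le> (\<integral>\<^sup>+\<eta>. indicator {a-d..a+d} \<eta> + indicator {b-d..b+d} \<eta> \<partial>eta_measure torus)"
    using T by (intro nn_integral_mono) (auto split: split_indicator)
  also have "\<dots> = (\<integral>\<^sup>+\<eta>. indicator {a-d..a+d} \<eta> \<partial>eta_measure torus) + (\<integral>\<^sup>+\<eta>. indicator {b-d..b+d} \<eta> \<partial>eta_measure torus)"
    by (rule nn_integral_add) (auto intro!: eta_borel measurable_ident_sets simp: eta_measure_def)
  also have "\<dots> \<le> ennreal (if torus then 2*d+1 else 2*d) + ennreal (if torus then 2*d+1 else 2*d)"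
    by (intro add_mono eta_int_interval d)
  also have "\<dots> = ennreal (Bd torus d)"
    using d by (simp add: Bd_def ennreal_plus[symmetric] del: ennreal_plus)
  finally show ?thesis .
qed



definition Eset :: "real \<Rightarrow> real \<Rightarrow> real \<Rightarrow> real \<Rightarrow> real \<Rightarrow> real \<Rightarrow> real \<Rightarrow> real \<Rightarrow> (real \<times> real \<times> real) set" where
  "Eset \<alpha> N1 N2 L1 L2 \<tau> \<xi> \<eta> = {y. fst (snd y) \<in> annulus N1 \<and> \<xi> - fst (snd y) \<in> annulus N2 \<and>
     \<bar>fst y - omega \<alpha> (fst (snd y)) (snd (snd y))\<bar> \<le> L1 \<and>
     \<bar>(\<tau> - fst y) - omega \<alpha> (\<xi> - fst (snd y)) (\<eta> - snd (snd y))\<bar> \<le> L2}"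

definition Fset :: "real \<Rightarrow> real \<Rightarrow> real \<Rightarrow> real \<Rightarrow> real \<Rightarrow> real \<Rightarrow> real \<Rightarrow> real \<Rightarrow> (real \<times> real) set" where
  "Fset \<alpha> N1 N2 L1 L2 \<tau> \<xi> \<eta> = {z. fst z \<in> annulus N1 \<and> \<xi> - fst z \<in> annulus N2 \<and>
     \<bar>\<tau> - omega \<alpha> (fst z) (snd z) - omega \<alpha> (\<xi> - fst z) (\<eta> - snd z)\<bar> \<le> L1 + L2}"

lemma Z_fst_meas[measurable]: "fst \<in> borel_measurable (lborel \<Otimes>\<^sub>M eta_measure torus)"
proof -
  have "fst \<in> measurable (lborel \<Otimes>\<^sub>M eta_measure torus) lborel" by (rule measurable_fst)
  then show ?thesis by simp
qed

lemma Z_snd_meas[measurable]: "snd \<in> borel_measurable (lborel \<Otimes>\<^sub>M eta_measure torus)"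
  by (rule eta_borel[where torus=torus]) (rule measurable_snd)

lemma Eset_meas: "(\<lambda>y. indicator (Eset \<alpha> N1 N2 L1 L2 \<tau> \<xi> \<eta>) y :: ennreal) \<in> borel_measurable (freq_measure torus)"
  unfolding Eset_def annulus_def by measurable

lemma Fset_meas: "(\<lambda>z. indicator (Fset \<alpha> N1 N2 L1 L2 \<tau> \<xi> \<eta>) z :: ennreal) \<in> borel_measurable (lborel \<Otimes>\<^sub>M eta_measure torus)"
  unfolding Fset_def annulus_def by measurable

lemma q_ident:
  fixes x1 x2 e u v :: real
  assumes "x1 \<noteq> 0" "x2 \<noteq> 0"
  shows "(v\<^sup>2/x1 + (e-v)\<^sup>2/x2) - (u\<^sup>2/x1 + (e-u)\<^sup>2/x2) = (v-u) * ((2 * u / x1 - 2 * (e-u) / x2) + (2 * v / x1 - 2 * (e-v) / x2)) / 2"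
  using assms by (simp add: field_simps power2_eq_square)


lemma tau_slice:
  fixes w1 w2 \<tau> L1 L2 :: real
  assumes "L1 \<ge> 0" "L2 \<ge> 0"
  shows "(\<integral>\<^sup>+t. indicator {t. \<bar>t - w1\<bar> \<le> L1 \<and> \<bar>(\<tau> - t) - w2\<bar> \<le> L2} t \<partial>lborel)
     \<le> (if \<bar>\<tau> - w1 - w2\<bar> \<le> L1 + L2 then ennreal (2 * min L1 L2) else 0)"
proof (cases "\<bar>\<tau> - w1 - w2\<bar> \<le> L1 + L2")
  case False
  then have "{t. \<bar>t - w1\<bar> \<le> L1 \<and> \<bar>(\<tau> - t) - w2\<bar> \<le> L2} = {}" by auto
  then show ?thesis by simp
next
  case True
  have a: "(\<integral>\<^sup>+t. indicator {t. \<bar>t - w1\<bar> \<le> L1 \<and> \<bar>(\<tau> - t) - w2\<bar> \<le> L2} t \<partial>lborel)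
      \<le> (\<integral>\<^sup>+t. indicator {w1 - L1..w1 + L1} t \<partial>lborel)"
    by (intro nn_integral_mono) (auto split: split_indicator)
  have b: "(\<integral>\<^sup>+t. indicator {t. \<bar>t - w1\<bar> \<le> L1 \<and> \<bar>(\<tau> - t) - w2\<bar> \<le> L2} t \<partial>lborel)
      \<le> (\<integral>\<^sup>+t. indicator {\<tau> - w2 - L2..\<tau> - w2 + L2} t \<partial>lborel)"
    by (intro nn_integral_mono) (auto split: split_indicator)
  have a': "(\<integral>\<^sup>+t. indicator {w1 - L1..w1 + L1} t \<partial>lborel) = ennreal (2 * L1)" using assms by simp
  have b': "(\<integral>\<^sup>+t. indicator {\<tau> - w2 - L2..\<tau> - w2 + L2} t \<partial>lborel) = ennreal (2 * L2)" using assms by simp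
  show ?thesis
  proof (cases "L1 \<le> L2")
    case True2: True
    then show ?thesis using a a' True by (simp add: min_def)
  next
    case False2: False
    then show ?thesis using b b' True by (simp add: min_def)
  qed
qed

lemma xi_slice:
  fixes N1 N2 \<xi> :: real
  assumes "N1 > 0" "N2 > 0"
  shows "(\<integral>\<^sup>+\<xi>1. indicator {\<xi>1. \<xi>1 \<in> annulus N1 \<and> \<xi> - \<xi>1 \<in> annulus N2} \<xi>1 \<partial>lborel) \<le> ennreal (8 * min N1 N2)"
proof (cases "N1 \<le> N2")
  case True
  have "(\<integral>\<^sup>+\<xi>1. indicator {\<xi>1. \<xi>1 \<in> annulus N1 \<and> \<xi> - \<xi>1 \<in> annulus N2} \<xi>1 \<partial>lborel)
      \<le> (\<integral>\<^sup>+\<xi>1. indicator {-4*N1..4*N1} \<xi>1 \<partial>lborel)"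
    by (intro nn_integral_mono) (auto simp: annulus_def split: split_indicator)
  also have "\<dots> = ennreal (8 * N1)" using assms by simp
  finally show ?thesis using True by (simp add: min_def)
next
  case False
  have "(\<integral>\<^sup>+\<xi>1. indicator {\<xi>1. \<xi>1 \<in> annulus N1 \<and> \<xi> - \<xi>1 \<in> annulus N2} \<xi>1 \<partial>lborel)
      \<le> (\<integral>\<^sup>+\<xi>1. indicator {\<xi> - 4*N2..\<xi> + 4*N2} \<xi>1 \<partial>lborel)"
    by (intro nn_integral_mono) (auto simp: annulus_def split: split_indicator)
  also have "\<dots> = ennreal (8 * N2)" using assms by simp
  finally show ?thesis using False by (simp add: min_def)
qed


lemma eta_slice:
  fixes \<alpha> N1 N2 L1 L2 \<tau> \<xi> \<eta> \<xi>1 sv :: real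
  assumes sv: "sv > 0" and L: "L1 \<ge> 0" "L2 \<ge> 0" and N: "N1 > 0" "N2 > 0"
    and H: "\<And>\<eta>1. (\<xi>1, \<eta>1) \<in> Fset \<alpha> N1 N2 L1 L2 \<tau> \<xi> \<eta> \<Longrightarrow> sv \<le> \<bar>2 * \<eta>1 / \<xi>1 - 2 * (\<eta> - \<eta>1) / (\<xi> - \<xi>1)\<bar>"
  shows "(\<integral>\<^sup>+\<eta>1. indicator (Fset \<alpha> N1 N2 L1 L2 \<tau> \<xi> \<eta>) (\<xi>1, \<eta>1) \<partial>eta_measure torus)
     \<le> ennreal (Bd torus (2 * (L1 + L2) / sv)) * indicator {\<xi>1. \<xi>1 \<in> annulus N1 \<and> \<xi> - \<xi>1 \<in> annulus N2} \<xi>1"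
proof (cases "\<xi>1 \<in> annulus N1 \<and> \<xi> - \<xi>1 \<in> annulus N2")
  case False
  then have "\<And>\<eta>1. indicator (Fset \<alpha> N1 N2 L1 L2 \<tau> \<xi> \<eta>) (\<xi>1, \<eta>1) = (0::ennreal)"
    by (auto simp: Fset_def)
  then show ?thesis by simp
next
  case True
  have nz: "\<xi>1 \<noteq> 0" "\<xi> - \<xi>1 \<noteq> 0" using True N annulus_pos by blast+
  define q where "q = (\<lambda>e. omega \<alpha> \<xi>1 e + omega \<alpha> (\<xi> - \<xi>1) (\<eta> - e))"
  define Dd where "Dd = (\<lambda>e. 2 * e / \<xi>1 - 2 * (\<eta> - e) / (\<xi> - \<xi>1))"
  define T where "T = {e. \<bar>\<tau> - q e\<bar> \<le> L1 + L2}"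
  have ind: "indicator (Fset \<alpha> N1 N2 L1 L2 \<tau> \<xi> \<eta>) (\<xi>1, e) = (indicator T e :: ennreal)" for e
    using True by (simp add: Fset_def T_def q_def indicator_def diff_diff_eq)
  have qd: "q v - q u = (v - u) * (Dd u + Dd v) / 2" for u v
  proof -
    have "q v - q u = (v\<^sup>2/\<xi>1 + (\<eta>-v)\<^sup>2/(\<xi> - \<xi>1)) - (u\<^sup>2/\<xi>1 + (\<eta>-u)\<^sup>2/(\<xi> - \<xi>1))"
      by (simp add: q_def omega_pp)
    also have "\<dots> = (v - u) * (Dd u + Dd v) / 2"
      unfolding Dd_def by (rule q_ident[OF nz])
    finally show ?thesis .
  qed
  have TD: "sv \<le> \<bar>Dd u\<bar>" if "u \<in> T" for u
  proof -
    have "(\<xi>1, u) \<in> Fset \<alpha> N1 N2 L1 L2 \<tau> \<xi> \<eta>"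
      using that True by (simp add: Fset_def T_def q_def diff_diff_eq)
    then show ?thesis using H by (simp add: Dd_def)
  qed
  have Tq: "\<bar>q v - q u\<bar> \<le> 2 * (L1 + L2)" if "u \<in> T" "v \<in> T" for u v
    using that by (simp add: T_def)
  obtain a b where ab: "T \<subseteq> {a - 2 * (L1 + L2) / sv..a + 2 * (L1 + L2) / sv} \<union> {b - 2 * (L1 + L2) / sv..b + 2 * (L1 + L2) / sv}"
    using eta_cover[of q Dd sv T "2 * (L1 + L2)", OF qd sv TD Tq] by blast
  have "(\<integral>\<^sup>+\<eta>1. indicator (Fset \<alpha> N1 N2 L1 L2 \<tau> \<xi> \<eta>) (\<xi>1, \<eta>1) \<partial>eta_measure torus)
      = (\<integral>\<^sup>+\<eta>1. indicator T \<eta>1 \<partial>eta_measure torus)" by (simp add: ind)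
  also have "\<dots> \<le> ennreal (Bd torus (2 * (L1 + L2) / sv))"
    by (rule eta_count[OF ab]) (use sv L in simp)
  finally show ?thesis using True by simp
qed


lemma E_integral:
  fixes \<alpha> N1 N2 L1 L2 \<tau> \<xi> \<eta> sv :: real
  assumes sv: "sv > 0" and L: "L1 \<ge> 0" "L2 \<ge> 0" and N: "N1 > 0" "N2 > 0"
    and H: "\<And>\<xi>1 \<eta>1. (\<xi>1, \<eta>1) \<in> Fset \<alpha> N1 N2 L1 L2 \<tau> \<xi> \<eta> \<Longrightarrow> sv \<le> \<bar>2 * \<eta>1 / \<xi>1 - 2 * (\<eta> - \<eta>1) / (\<xi> - \<xi>1)\<bar>"
  shows "(\<integral>\<^sup>+y. indicator (Eset \<alpha> N1 N2 L1 L2 \<tau> \<xi> \<eta>) y \<partial>freq_measure torus)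
     \<le> ennreal (2 * min L1 L2 * (8 * min N1 N2) * Bd torus (2 * (L1 + L2) / sv))"
proof -
  let ?Z = "(lborel :: real measure) \<Otimes>\<^sub>M eta_measure torus"
  let ?E = "Eset \<alpha> N1 N2 L1 L2 \<tau> \<xi> \<eta>"
  let ?F = "Fset \<alpha> N1 N2 L1 L2 \<tau> \<xi> \<eta>"
  let ?S = "{\<xi>1. \<xi>1 \<in> annulus N1 \<and> \<xi> - \<xi>1 \<in> annulus N2}"
  let ?B = "Bd torus (2 * (L1 + L2) / sv)"
  have Bpos: "?B \<ge> 0" using sv L by (simp add: Bd_def)
  have sfZ: "sigma_finite_measure ?Z"
    by (intro sigma_finite_pair_measure sigma_finite_lborel' sigma_finite_eta)
  interpret PZ: pair_sigma_finite "lborel :: real measure" ?Z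
    using sfZ sigma_finite_lborel' by (simp add: pair_sigma_finite_def)
  have m: "(\<lambda>y. indicator ?E y :: ennreal) \<in> borel_measurable (lborel \<Otimes>\<^sub>M ?Z)"
    using Eset_meas[of \<alpha> N1 N2 L1 L2 \<tau> \<xi> \<eta> torus] by (simp add: freq_measure_def)
  have "(\<integral>\<^sup>+y. indicator ?E y \<partial>freq_measure torus) = (\<integral>\<^sup>+y. indicator ?E y \<partial>(lborel \<Otimes>\<^sub>M ?Z))"
    by (simp add: freq_measure_def)
  also have "\<dots> = (\<integral>\<^sup>+z. (\<integral>\<^sup>+t. indicator ?E (t, z) \<partial>lborel) \<partial>?Z)"
    by (rule PZ.nn_integral_snd[OF m, symmetric])
  also have "\<dots> \<le> (\<integral>\<^sup>+z. ennreal (2 * min L1 L2) * indicator ?F z \<partial>?Z)"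
  proof (rule nn_integral_mono)
    fix z :: "real \<times> real"
    obtain \<xi>1 \<eta>1 where z: "z = (\<xi>1, \<eta>1)" by (cases z) auto
    show "(\<integral>\<^sup>+t. indicator ?E (t, z) \<partial>lborel) \<le> ennreal (2 * min L1 L2) * indicator ?F z"
    proof (cases "\<xi>1 \<in> annulus N1 \<and> \<xi> - \<xi>1 \<in> annulus N2")
      case False
      then have "\<And>t. indicator ?E (t, z) = (0::ennreal)" by (auto simp: Eset_def z)
      then show ?thesis by simp
    next
      case True
      have "(\<integral>\<^sup>+t. indicator ?E (t, z) \<partial>lborel) = (\<integral>\<^sup>+t. indicator {t. \<bar>t - omega \<alpha> \<xi>1 \<eta>1\<bar> \<le> L1 \<and> \<bar>(\<tau> - t) - omega \<alpha> (\<xi> - \<xi>1) (\<eta> - \<eta>1)\<bar> \<le> L2} t \<partial>lborel)"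
        using True by (intro nn_integral_cong) (simp add: Eset_def z indicator_def)
      also have "\<dots> \<le> (if \<bar>\<tau> - omega \<alpha> \<xi>1 \<eta>1 - omega \<alpha> (\<xi> - \<xi>1) (\<eta> - \<eta>1)\<bar> \<le> L1 + L2 then ennreal (2 * min L1 L2) else 0)"
        by (rule tau_slice[OF L])
      also have "\<dots> = ennreal (2 * min L1 L2) * indicator ?F z"
        using True by (simp add: Fset_def z indicator_def)
      finally show ?thesis .
    qed
  qed
  also have "\<dots> = ennreal (2 * min L1 L2) * (\<integral>\<^sup>+z. indicator ?F z \<partial>?Z)"
    by (rule nn_integral_cmult) (rule Fset_meas)
  also have "(\<integral>\<^sup>+z. indicator ?F z \<partial>?Z) = (\<integral>\<^sup>+\<xi>1. (\<integral>\<^sup>+\<eta>1. indicator ?F (\<xi>1, \<eta>1) \<partial>eta_measure torus) \<partial>lborel)"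
    by (rule sigma_finite_measure.nn_integral_fst[OF sigma_finite_eta Fset_meas, symmetric])
  also have "\<dots> \<le> (\<integral>\<^sup>+\<xi>1. ennreal ?B * indicator ?S \<xi>1 \<partial>lborel)"
    by (rule nn_integral_mono) (rule eta_slice[OF sv L N H])
  also have "\<dots> = ennreal ?B * (\<integral>\<^sup>+\<xi>1. indicator ?S \<xi>1 \<partial>lborel)"
    by (rule nn_integral_cmult) (simp add: annulus_def)
  also have "\<dots> \<le> ennreal ?B * ennreal (8 * min N1 N2)"
    by (rule mult_left_mono[OF xi_slice[OF N]]) simp
  finally have "(\<integral>\<^sup>+y. indicator ?E y \<partial>freq_measure torus) \<le> ennreal (2 * min L1 L2) * (ennreal ?B * ennreal (8 * min N1 N2))"
    by (simp add: mult_left_mono)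
  also have "\<dots> = ennreal (2 * min L1 L2 * (8 * min N1 N2) * ?B)"
    using Bpos L N by (simp add: ennreal_mult[symmetric] mult_ac)
  finally show ?thesis .
qed



definition kap :: "real \<Rightarrow> real \<Rightarrow> real" where
  "kap K \<alpha> = sqrt (c0 K \<alpha> / (32*K))"

definition Acst :: "real \<Rightarrow> real \<Rightarrow> real" where
  "Acst K \<alpha> = 2 * (4 * (4 * K powr (\<alpha>/2) / kap K \<alpha>) + 2)"

lemma kap_pos: "K \<ge> 1 \<Longrightarrow> kap K \<alpha> > 0"
  using c0_pos[of K \<alpha>] by (simp add: kap_def)

lemma Bd_bound:
  fixes \<alpha> K N1 N2 L1 L2 :: real
  assumes "\<alpha> \<ge> 0" "K \<ge> 1" "N1 > 0" "N2 > 0" "N2 \<le> K*N1" "L1 > 0" "L2 > 0"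
  shows "Bd torus (2 * (L1 + L2) / (kap K \<alpha> * N1 powr (\<alpha>/2)))
      \<le> Acst K \<alpha> * (C1 torus \<alpha> (max L1 L2) (max N1 N2))\<^sup>2"
proof -
  define \<kappa> where "\<kappa> = kap K \<alpha>"
  have kp: "\<kappa> > 0" using kap_pos assms by (simp add: \<kappa>_def)
  define Lm where "Lm = max L1 L2"
  define Nm where "Nm = max N1 N2"
  define r where "r = Lm / Nm powr (\<alpha>/2)"
  define k' where "k' = 4 * K powr (\<alpha>/2) / \<kappa>"
  have Lm: "Lm > 0" using assms by (simp add: Lm_def)
  have Nm: "Nm > 0" "Nm \<le> K * N1" using assms by (auto simp: Nm_def)
  have r0: "r \<ge> 0" using Lm Nm by (simp add: r_def)
  have k'0: "k' \<ge> 0" using kp by (simp add: k'_def)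
  have N1p: "N1 powr (\<alpha>/2) > 0" using assms by simp
  have Nmp: "Nm powr (\<alpha>/2) > 0" using Nm by simp
  have "Nm powr (\<alpha>/2) \<le> (K * N1) powr (\<alpha>/2)"
    using Nm assms by (intro powr_mono2) auto
  also have "\<dots> = K powr (\<alpha>/2) * N1 powr (\<alpha>/2)" using assms by (simp add: powr_mult)
  finally have Nmle: "Nm powr (\<alpha>/2) \<le> K powr (\<alpha>/2) * N1 powr (\<alpha>/2)" .
  have "2 * (L1 + L2) / (\<kappa> * N1 powr (\<alpha>/2)) \<le> 4 * Lm / (\<kappa> * N1 powr (\<alpha>/2))"
    using kp N1p assms by (intro divide_right_mono) (auto simp: Lm_def)
  also have "\<dots> \<le> k' * r"
  proof -
    have "4 * Lm / (\<kappa> * N1 powr (\<alpha>/2)) = 4 * Lm * K powr (\<alpha>/2) / (\<kappa> * (K powr (\<alpha>/2) * N1 powr (\<alpha>/2)))"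
      using assms kp by simp
    also have "\<dots> \<le> 4 * Lm * K powr (\<alpha>/2) / (\<kappa> * Nm powr (\<alpha>/2))"
      using Nmle kp Nmp Lm by (intro divide_left_mono mult_left_mono mult_pos_pos) auto
    also have "\<dots> = k' * r" by (simp add: k'_def r_def)
    finally show ?thesis .
  qed
  finally have dd: "2 * (L1 + L2) / (\<kappa> * N1 powr (\<alpha>/2)) \<le> k' * r" .
  define dv where "dv = 2 * (L1 + L2) / (\<kappa> * N1 powr (\<alpha>/2))"
  have dd': "dv \<le> k' * r" using dd by (simp add: dv_def)
  have dd0: "2 * (L1 + L2) / (\<kappa> * N1 powr (\<alpha>/2)) \<ge> 0" using assms kp N1p by simp
  have A: "Acst K \<alpha> = 2 * (4 * k' + 2)" by (simp add: Acst_def k'_def \<kappa>_def)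
  show ?thesis
  proof (cases torus)
    case False
    have C: "(C1 torus \<alpha> (max L1 L2) (max N1 N2))\<^sup>2 = r"
      using False r0 by (simp add: C1_def r_def Lm_def Nm_def)
    have "Bd torus (2 * (L1 + L2) / (\<kappa> * N1 powr (\<alpha>/2))) = 4 * dv"
      using False by (simp add: Bd_def dv_def)
    also have "\<dots> \<le> 4 * (k' * r)" using dd' by simp
    also have "\<dots> \<le> 2 * (4 * k' + 2) * r" using r0 k'0 by (simp add: algebra_simps)
    finally show ?thesis unfolding A C \<kappa>_def .
  next
    case True
    define j where "j = sqrt (1 + r\<^sup>2)"
    have j: "1 \<le> j" "r \<le> j" unfolding j_def using r0 by (auto intro: real_le_rsqrt)
    have C: "(C1 torus \<alpha> (max L1 L2) (max N1 N2))\<^sup>2 = j"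
      using True by (simp add: C1_def japanese_def j_def r_def Lm_def Nm_def)
    have "Bd torus (2 * (L1 + L2) / (\<kappa> * N1 powr (\<alpha>/2))) = 4 * dv + 2"
      using True by (simp add: Bd_def dv_def)
    also have "\<dots> \<le> 4 * (k' * r) + 2" using dd' by simp
    also have "\<dots> \<le> (4 * k' + 2) * (r + 1)" using r0 k'0 by (simp add: algebra_simps)
    also have "\<dots> \<le> (4 * k' + 2) * (2 * j)" using j k'0 by (intro mult_left_mono) auto
    also have "\<dots> = 2 * (4 * k' + 2) * j" by simp
    finally show ?thesis unfolding A C \<kappa>_def .
  qed
qed


definition Cc :: "real \<Rightarrow> real \<Rightarrow> real" where
  "Cc K \<alpha> = 16 * Acst K \<alpha>"

lemma Acst_pos: "K \<ge> 1 \<Longrightarrow> Acst K \<alpha> > 0"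
  using kap_pos[of K \<alpha>] by (simp add: Acst_def add_pos_nonneg)

lemma C1_pos: "L > 0 \<Longrightarrow> N > 0 \<Longrightarrow> C1 torus \<alpha> L N > 0"
  by (simp add: C1_def japanese_def add_pos_nonneg)

lemma main_bound:
  fixes torus :: bool and \<alpha> K N1 N2 N3 L1 L2 L3 :: real and f1 f2 :: "real \<times> real \<times> real \<Rightarrow> complex"
  assumes \<alpha>: "\<alpha> \<ge> 2" and K: "K \<ge> 1" and N: "N1 > 0" "N2 > 0" "N3 > 0"
    and NK: "N1 \<le> K*N3" "N3 \<le> K*N1" "N2 \<le> K*N1"
    and L: "L1 \<ge> 1" "L2 \<ge> 1" "L3 \<ge> 0"
    and Lsmall: "L1 \<le> c0 K \<alpha> / 6 * N1 powr \<alpha> * N2" "L2 \<le> c0 K \<alpha> / 6 * N1 powr \<alpha> * N2"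
      "L3 \<le> c0 K \<alpha> / 6 * N1 powr \<alpha> * N2"
    and f1: "f1 \<in> borel_measurable (freq_measure torus)"
    and f2: "f2 \<in> borel_measurable (freq_measure torus)"
    and s1: "\<forall>x. f1 x \<noteq> 0 \<longrightarrow> x \<in> Dset torus \<alpha> N1 L1"
    and s2: "\<forall>x. f2 x \<noteq> 0 \<longrightarrow> x \<in> Dset torus \<alpha> N2 L2"
  shows "L2norm torus (\<lambda>x. indicator (Dset torus \<alpha> N3 L3) x * conv torus f1 f2 x)
        \<le> ennreal (sqrt (Cc K \<alpha>) * sqrt (min L1 L2) * sqrt (min N1 N2)
                     * C1 torus \<alpha> (max L1 L2) (max N1 N2))
          * L2norm torus f1 * L2norm torus f2"
proof -
  let ?M = "freq_measure torus"
  let ?D3 = "Dset torus \<alpha> N3 L3"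
  define C1v where "C1v = C1 torus \<alpha> (max L1 L2) (max N1 N2)"
  define Cr where "Cr = Cc K \<alpha> * min L1 L2 * min N1 N2 * C1v\<^sup>2"
  define sv where "sv = kap K \<alpha> * N1 powr (\<alpha>/2)"
  define e where "e = (\<lambda>x y. indicator (Eset \<alpha> N1 N2 L1 L2 (fst x) (fst (snd x)) (snd (snd x))) y :: ennreal)"
  have svp: "sv > 0" using kap_pos[OF K] N by (simp add: sv_def)
  have C1p: "C1v > 0" unfolding C1v_def using L N by (intro C1_pos) auto
  have D3sp: "?D3 \<subseteq> space ?M"
    by (auto simp: Dset_def space_freq space_eta)
  have em: "(\<lambda>y. e x y) \<in> borel_measurable ?M" for x
    unfolding e_def by (rule Eset_meas)
  have eb: "(\<integral>\<^sup>+y. (e x y)\<^sup>2 \<partial>?M) \<le> ennreal Cr" if x: "x \<in> ?D3" for x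
  proof -
    obtain \<tau> \<xi> \<eta> where xe: "x = (\<tau>, \<xi>, \<eta>)" by (cases x) auto
    have x3: "\<xi> \<in> annulus N3" "\<bar>\<tau> - omega \<alpha> \<xi> \<eta>\<bar> \<le> L3" using x by (auto simp: Dset_def xe)
    have sq: "(indicator A y :: ennreal)\<^sup>2 = indicator A y" for A y by (simp split: split_indicator)
    have H: "sv \<le> \<bar>2 * \<eta>1 / \<xi>1 - 2 * (\<eta> - \<eta>1) / (\<xi> - \<xi>1)\<bar>"
      if F: "(\<xi>1, \<eta>1) \<in> Fset \<alpha> N1 N2 L1 L2 \<tau> \<xi> \<eta>" for \<xi>1 \<eta>1
    proof -
      have F': "\<xi>1 \<in> annulus N1" "\<xi> - \<xi>1 \<in> annulus N2"
        "\<bar>\<tau> - omega \<alpha> \<xi>1 \<eta>1 - omega \<alpha> (\<xi>-\<xi>1) (\<eta>-\<eta>1)\<bar> \<le> L1 + L2"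
        using F by (auto simp: Fset_def)
      have "L1 + L2 + L3 \<le> c0 K \<alpha> / 2 * N1 powr \<alpha> * N2" using Lsmall by linarith
      from D_lower[OF _ K N NK F'(1,2) x3(1) x3(2) F'(3) this] \<alpha>
      show ?thesis by (simp add: sv_def kap_def)
    qed
    have "(\<integral>\<^sup>+y. (e x y)\<^sup>2 \<partial>?M) = (\<integral>\<^sup>+y. indicator (Eset \<alpha> N1 N2 L1 L2 \<tau> \<xi> \<eta>) y \<partial>?M)"
      by (simp add: sq e_def xe)
    also have "\<dots> \<le> ennreal (2 * min L1 L2 * (8 * min N1 N2) * Bd torus (2 * (L1 + L2) / sv))"
      by (rule E_integral[OF svp _ _ N(1,2) H]) (use L in auto)
    also have "\<dots> \<le> ennreal Cr"
    proof (rule ennreal_leI)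
      have B: "Bd torus (2 * (L1 + L2) / sv) \<le> Acst K \<alpha> * C1v\<^sup>2"
        unfolding sv_def C1v_def by (rule Bd_bound) (use \<alpha> K N NK L in auto)
      have p: "0 \<le> 2 * min L1 L2 * (8 * min N1 N2)" using L N by simp
      have "2 * min L1 L2 * (8 * min N1 N2) * Bd torus (2 * (L1 + L2) / sv)
          \<le> 2 * min L1 L2 * (8 * min N1 N2) * (Acst K \<alpha> * C1v\<^sup>2)"
        by (rule mult_left_mono[OF B p])
      also have "\<dots> = Cr" by (simp add: Cr_def Cc_def)
      finally show "2 * min L1 L2 * (8 * min N1 N2) * Bd torus (2 * (L1 + L2) / sv) \<le> Cr" .
    qed
    finally show ?thesis .
  qed
  have ee: "ennreal (norm (f1 y * f2 (x - y))) = e x y * ennreal (norm (f1 y) * norm (f2 (x - y)))"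
    if x: "x \<in> ?D3" for x y
  proof (cases "f1 y = 0 \<or> f2 (x - y) = 0")
    case True
    then show ?thesis by auto
  next
    case False
    then have "y \<in> Dset torus \<alpha> N1 L1" "x - y \<in> Dset torus \<alpha> N2 L2" using s1 s2 by blast+
    then have "y \<in> Eset \<alpha> N1 N2 L1 L2 (fst x) (fst (snd x)) (snd (snd x))"
      by (cases x; cases y) (auto simp: Dset_def Eset_def)
    then show ?thesis by (simp add: e_def norm_mult)
  qed
  have main: "(\<integral>\<^sup>+x. ennreal ((cmod (indicator ?D3 x * conv torus f1 f2 x))\<^sup>2) \<partial>?M)
     \<le> ennreal Cr * (\<integral>\<^sup>+x. ennreal ((cmod (f1 x))\<^sup>2) \<partial>?M) * (\<integral>\<^sup>+x. ennreal ((cmod (f2 x))\<^sup>2) \<partial>?M)"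
    by (rule conv_main[OF f1 f2 D3sp em eb ee])
  define c where "c = sqrt (Cc K \<alpha>) * sqrt (min L1 L2) * sqrt (min N1 N2) * C1v"
  have Ccp: "Cc K \<alpha> > 0" using Acst_pos[OF K] by (simp add: Cc_def)
  have cp: "c > 0" using Ccp L N C1p by (simp add: c_def)
  have c2: "c\<^sup>2 = Cr" using Ccp L N
    by (simp add: c_def Cr_def power_mult_distrib)
  have "L2n (\<integral>\<^sup>+x. ennreal ((cmod (indicator ?D3 x * conv torus f1 f2 x))\<^sup>2) \<partial>?M)
      \<le> ennreal c * L2n (\<integral>\<^sup>+x. ennreal ((cmod (f1 x))\<^sup>2) \<partial>?M) * L2n (\<integral>\<^sup>+x. ennreal ((cmod (f2 x))\<^sup>2) \<partial>?M)"
    by (rule L2n_final'[OF cp]) (use main c2 in simp)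
  then show ?thesis by (simp add: L2norm_L2n c_def C1v_def)
qed


theorem corollary4p2:
  "\<forall>\<alpha>::real. \<alpha> \<ge> 2 \<longrightarrow> (\<forall>K::real. K \<ge> 1 \<longrightarrow>
    (\<exists>\<epsilon>>0. \<exists>C>0. \<forall>torus N1 N2 N3 L1 L2 L3 f1 f2.
      dyadic_int N1 \<and> dyadic_int N2 \<and> dyadic_int N3 \<and>
      N1 \<le> K * N3 \<and> N3 \<le> K * N1 \<and> N2 \<le> K * N1 \<and>
      dyadic_nat L1 \<and> dyadic_nat L2 \<and> dyadic_nat L3 \<and>
      L1 \<le> \<epsilon> * N1 powr \<alpha> * N2 \<and> L2 \<le> \<epsilon> * N1 powr \<alpha> * N2 \<and>
      L3 \<le> \<epsilon> * N1 powr \<alpha> * N2 \<and>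
      f1 \<in> borel_measurable (freq_measure torus) \<and>
      f2 \<in> borel_measurable (freq_measure torus) \<and>
      (\<forall>x. f1 x \<noteq> 0 \<longrightarrow> x \<in> Dset torus \<alpha> N1 L1) \<and>
      (\<forall>x. f2 x \<noteq> 0 \<longrightarrow> x \<in> Dset torus \<alpha> N2 L2)
      \<longrightarrow>
      L2norm torus (\<lambda>x. indicator (Dset torus \<alpha> N3 L3) x * conv torus f1 f2 x)
        \<le> ennreal (C * sqrt (min L1 L2) * sqrt (min N1 N2)
                     * C1 torus \<alpha> (max L1 L2) (max N1 N2))
          * L2norm torus f1 * L2norm torus f2))"
proof (intro allI impI)
  fix \<alpha> K :: real
  assume \<alpha>: "\<alpha> \<ge> 2" and K: "K \<ge> 1"
  have Ccp: "Cc K \<alpha> > 0" using Acst_pos[OF K] by (simp add: Cc_def)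
  show "\<exists>\<epsilon>>0. \<exists>C>0. \<forall>torus N1 N2 N3 L1 L2 L3 f1 f2.
      dyadic_int N1 \<and> dyadic_int N2 \<and> dyadic_int N3 \<and>
      N1 \<le> K * N3 \<and> N3 \<le> K * N1 \<and> N2 \<le> K * N1 \<and>
      dyadic_nat L1 \<and> dyadic_nat L2 \<and> dyadic_nat L3 \<and>
      L1 \<le> \<epsilon> * N1 powr \<alpha> * N2 \<and> L2 \<le> \<epsilon> * N1 powr \<alpha> * N2 \<and>
      L3 \<le> \<epsilon> * N1 powr \<alpha> * N2 \<and>
      f1 \<in> borel_measurable (freq_measure torus) \<and>
      f2 \<in> borel_measurable (freq_measure torus) \<and>
      (\<forall>x. f1 x \<noteq> 0 \<longrightarrow> x \<in> Dset torus \<alpha> N1 L1) \<and>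
      (\<forall>x. f2 x \<noteq> 0 \<longrightarrow> x \<in> Dset torus \<alpha> N2 L2)
      \<longrightarrow>
      L2norm torus (\<lambda>x. indicator (Dset torus \<alpha> N3 L3) x * conv torus f1 f2 x)
        \<le> ennreal (C * sqrt (min L1 L2) * sqrt (min N1 N2)
                     * C1 torus \<alpha> (max L1 L2) (max N1 N2))
          * L2norm torus f1 * L2norm torus f2"
  proof (rule exI[of _ "c0 K \<alpha> / 6"], intro conjI exI[of _ "sqrt (Cc K \<alpha>)"] allI impI)
    show "c0 K \<alpha> / 6 > 0" using c0_pos[OF K] by simp
    show "sqrt (Cc K \<alpha>) > 0" using Ccp by simp
    fix torus N1 N2 N3 L1 L2 L3 and f1 f2 :: "real \<times> real \<times> real \<Rightarrow> complex"
    assume h: "dyadic_int N1 \<and> dyadic_int N2 \<and> dyadic_int N3 \<and>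
      N1 \<le> K * N3 \<and> N3 \<le> K * N1 \<and> N2 \<le> K * N1 \<and>
      dyadic_nat L1 \<and> dyadic_nat L2 \<and> dyadic_nat L3 \<and>
      L1 \<le> c0 K \<alpha> / 6 * N1 powr \<alpha> * N2 \<and> L2 \<le> c0 K \<alpha> / 6 * N1 powr \<alpha> * N2 \<and>
      L3 \<le> c0 K \<alpha> / 6 * N1 powr \<alpha> * N2 \<and>
      f1 \<in> borel_measurable (freq_measure torus) \<and>
      f2 \<in> borel_measurable (freq_measure torus) \<and>
      (\<forall>x. f1 x \<noteq> 0 \<longrightarrow> x \<in> Dset torus \<alpha> N1 L1) \<and>
      (\<forall>x. f2 x \<noteq> 0 \<longrightarrow> x \<in> Dset torus \<alpha> N2 L2)"
    have dpos: "N > 0" if "dyadic_int N" for N using that by (auto simp: dyadic_int_def)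
    have dge: "L \<ge> 1" if "dyadic_nat L" for L :: real using that by (auto simp: dyadic_nat_def)
    show "L2norm torus (\<lambda>x. indicator (Dset torus \<alpha> N3 L3) x * conv torus f1 f2 x)
        \<le> ennreal (sqrt (Cc K \<alpha>) * sqrt (min L1 L2) * sqrt (min N1 N2)
                     * C1 torus \<alpha> (max L1 L2) (max N1 N2))
          * L2norm torus f1 * L2norm torus f2"
    proof (rule main_bound[OF \<alpha> K])
      show "N1 > 0" "N2 > 0" "N3 > 0" using h dpos by blast+
      have "L1 \<ge> 1" "L2 \<ge> 1" "L3 \<ge> 1" using h dge by blast+
      then show "L1 \<ge> 1" "L2 \<ge> 1" "L3 \<ge> 0" by simp_all
    qed (use h in blast)+
  qed
qed

end
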